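(* Consider the following two-player Bayesian contest. Fix real $a\neq0$, $b>0$, $c>0$. Each player's private cost type is drawn independently from a common distribution $F$ with support $[\alpha,\beta]\subset(0,c)$ and nondegenerate variance. Let $M_1=E[\theta]$, $M_2=E[\theta^2]$, $\Delta=c-M_1$, $\sigma_\theta^2=M_2-M_1^2>0$, $\kappa=b/a$, $\omega=\sigma_\theta^2/a^2$, $\zeta=\frac{b^2-a\Delta}{a^2}$. In the affine relaxation, actions are arbitrary real numbers and a type-$\theta$ player who chooses $\tilde x\in\mathbb R$ against an opponent using strategy $x(\cdot)$ receives interim utility $\int_\alpha^\beta\bigl[P(\tilde x,x(\theta_y))-\theta\tilde x\bigr]\,dF(\theta_y)$, where $P(x,y)=\tfrac12+(x-y)\bigl(c-b(x+y)+axy\bigr)$ (no truncation). Then the affine relaxation has a unique symmetric Bayesian Nash equilibrium; it is affine and strictly decreasing in type, and expected effort equals $$E[x]=\kappa-\frac{\operatorname{sgn}(a)}{\sqrt2}\sqrt{\zeta+\sqrt{\zeta^2+\omega}}.$$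
   Context: A symmetric Bayesian Nash equilibrium is a strategy $x:[\alpha,\beta]\to\mathbb R$ (with finite first and second moments under $F$) such that, when the opponent uses $x(\cdot)$, $x(\theta)$ maximizes interim utility for every type $\theta$. *)

theory Defs
  imports "HOL-Probability.Probability"
begin

definition contest_P :: "real \<Rightarrow> real \<Rightarrow> real \<Rightarrow> real \<Rightarrow> real \<Rightarrow> real" where
  "contest_P a b c x y = 1/2 + (x - y) * (c - b * (x + y) + a * x * y)"

definition measure_support :: "real measure \<Rightarrow> real set" where
  "measure_support F = {t. \<forall>e>0. measure F (ball t e) > 0}"

definition interim_utility ::
  "real \<Rightarrow> real \<Rightarrow> real \<Rightarrow> real measure \<Rightarrow> (real \<Rightarrow> real) \<Rightarrow> real \<Rightarrow> real \<Rightarrow> real" where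
  "interim_utility a b c F x \<theta> xt = (\<integral>\<theta>y. (contest_P a b c xt (x \<theta>y) - \<theta> * xt) \<partial>F)"

definition symmetric_BNE ::
  "real \<Rightarrow> real \<Rightarrow> real \<Rightarrow> real measure \<Rightarrow> real \<Rightarrow> real \<Rightarrow> (real \<Rightarrow> real) \<Rightarrow> bool" where
  "symmetric_BNE a b c F \<alpha> \<beta> x \<longleftrightarrow>
     integrable F x \<and> integrable F (\<lambda>t. (x t)^2) \<and>
     (\<forall>\<theta>\<in>{\<alpha>..\<beta>}. \<forall>xt::real.
        interim_utility a b c F x \<theta> xt \<le> interim_utility a b c F x \<theta> (x \<theta>))"

end

theory Submission
  imports Defs
begin


lemma quad_max:
  fixes A l :: real
  assumes "\<And>t. t*(A* t+l) \<le> 0"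
  shows "A \<le> 0 \<and> l = 0"
proof -
  have "A \<le> 0" using assms[of 1] assms[of "-1"] by simp
  moreover have "l = 0"
  proof (cases "A = 0")
    case True then show ?thesis using assms[of 1] assms[of "-1"] by simp
  next
    case False
    with \<open>A \<le> 0\<close> have "A < 0" by simp
    have "(-l/(2* A)) * (A*(-l/(2* A)) + l) = -(l^2)/(4* A)"
      using False by (simp add: field_simps power2_eq_square)
    with assms[of "-l/(2* A)"] have "-(l^2)/(4* A) \<le> 0" by simp
    moreover have "l^2/(4* A) \<le> 0" using \<open>A < 0\<close> by (intro divide_nonneg_neg) auto
    ultimately have "l^2/(4* A) = 0" by simp
    then show ?thesis using \<open>A < 0\<close> by simp
  qed
  ultimately show ?thesis by simp
qed

lemma interim_formula:
  assumes P: "prob_space F" and I1: "integrable F y" and I2: "integrable F (\<lambda>t. (y t)^2)"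
  shows "interim_utility a b c F y \<theta> xt = (1/2 + c* xt - b* xt^2 - \<theta>* xt)
     + ((a* xt^2 - c) * (\<integral>t. y t \<partial>F) + (b - a* xt) * (\<integral>t. (y t)^2 \<partial>F))"
proof -
  interpret prob_space F by (rule P)
  have eq: "(\<lambda>t. contest_P a b c xt (y t) - \<theta>* xt) = (\<lambda>t. (1/2 + c* xt - b* xt^2 - \<theta>* xt)
       + ((a* xt^2 - c) * y t + (b - a* xt) * (y t)^2))"
    by (rule ext) (simp add: contest_P_def algebra_simps power2_eq_square)
  have i1: "integrable F (\<lambda>t. (a* xt^2 - c) * y t)" using I1 by simp
  have i2: "integrable F (\<lambda>t. (b - a* xt) * (y t)^2)" using I2 by simp
  show ?thesis unfolding interim_utility_def eq
    using i1 i2 by (simp add: integral_add prob_space)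
qed

lemma affine_moments:
  fixes p q :: real
  assumes P: "prob_space F" and I1: "integrable F (\<lambda>t. t)" and I2: "integrable F (\<lambda>t. t^2)"
  shows "integrable F (\<lambda>t. p + q* t)" "integrable F (\<lambda>t. (p + q* t)^2)"
    "(\<integral>t. p + q* t \<partial>F) = p + q * (\<integral>t. t \<partial>F)"
    "(\<integral>t. (p + q* t)^2 \<partial>F) = p^2 + 2* p* q * (\<integral>t. t \<partial>F) + q^2 * (\<integral>t. t^2 \<partial>F)"
proof -
  interpret prob_space F by (rule P)
  have eq: "(\<lambda>t. (p + q* t)^2) = (\<lambda>t. p^2 + (2* p* q* t + q^2* t^2))"
    by (rule ext) (simp add: power2_eq_square algebra_simps)
  have i1: "integrable F (\<lambda>t. q* t)" using I1 by simp
  have i2: "integrable F (\<lambda>t. 2* p* q* t)" using I1 by simp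
  have i3: "integrable F (\<lambda>t. q^2* t^2)" using I2 by simp
  show "integrable F (\<lambda>t. p + q* t)" using i1 by simp
  show "integrable F (\<lambda>t. (p + q* t)^2)" unfolding eq using i2 i3 by simp
  show "(\<integral>t. p + q* t \<partial>F) = p + q * (\<integral>t. t \<partial>F)" using i1 by (simp add: integral_add prob_space)
  show "(\<integral>t. (p + q* t)^2 \<partial>F) = p^2 + 2* p* q * (\<integral>t. t \<partial>F) + q^2 * (\<integral>t. t^2 \<partial>F)"
    unfolding eq using i2 i3 by (simp add: integral_add prob_space)
qed

lemma alg_exist:
  fixes a b D sg z om w :: real
  assumes a: "a \<noteq> 0" and s: "sg > 0"
  and zd: "z = (b^2 - a* D)/a^2" and od: "om = sg/a^2"
  and wd: "w = (z + sqrt (z^2 + om))/2"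
  shows "w > 0" "(\<bar>a\<bar> * sqrt w)^4 - (b^2 - a* D)*(\<bar>a\<bar> * sqrt w)^2 - a^2* sg/4 = 0"
proof -
  have om: "om > 0" using a s od by simp
  have "sqrt (z^2 + om) > -z" using om by (intro real_less_rsqrt) simp
  then show wpos: "w > 0" using wd by simp
  have sq: "(sqrt (z^2 + om))^2 = z^2 + om" using om by (simp add: add_pos_nonneg)
  have "w^2 - z* w - om/4 = ((sqrt (z^2 + om))^2 - z^2 - om)/4"
    unfolding wd by (simp add: power2_eq_square field_simps)
  then have weq: "w^2 - z* w - om/4 = 0" using sq by simp
  have u2: "(\<bar>a\<bar> * sqrt w)^2 = a^2 * w" using wpos by (simp add: power_mult_distrib)
  have "(\<bar>a\<bar> * sqrt w)^4 = ((\<bar>a\<bar> * sqrt w)^2)^2" by (simp only: power4_eq_xxxx power2_eq_square)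
  also have "\<dots> = a^4 * w^2" unfolding u2 by (simp add: power4_eq_xxxx power2_eq_square)
  finally have u4: "(\<bar>a\<bar> * sqrt w)^4 = a^4 * w^2" .
  have z: "b^2 - a* D = a^2* z" using a zd by simp
  have o: "sg = a^2* om" using a od by simp
  have "(\<bar>a\<bar> * sqrt w)^4 - (b^2 - a* D)*(\<bar>a\<bar> * sqrt w)^2 - a^2* sg/4 = a^4 * (w^2 - z* w - om/4)"
    unfolding u2 u4 z o by (simp add: algebra_simps power2_eq_square power4_eq_xxxx)
  then show "(\<bar>a\<bar> * sqrt w)^4 - (b^2 - a* D)*(\<bar>a\<bar> * sqrt w)^2 - a^2* sg/4 = 0" using weq by simp
qed

lemma l1: fixes a u vv :: real assumes a: "a \<noteq> 0" and upos: "u > 0" and vd: "vv = u^2 / a^2"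
  shows "vv > 0" "u^2 = a^2 * vv"
  using a upos vd by simp_all
lemma l2: fixes u a vv :: real assumes u2: "u^2 = a^2 * vv" shows "u^4 = a^4 * vv^2"
proof -
  have "u^4 = (u^2)^2" by (simp only: power4_eq_xxxx power2_eq_square)
  also have "\<dots> = a^4 * vv^2" unfolding u2 by (simp add: power4_eq_xxxx power2_eq_square)
  finally show ?thesis .
qed
lemma l3: fixes u a vv b D sg z om :: real assumes u2: "u^2 = a^2 * vv" and u4: "u^4 = a^4 * vv^2" and  z: "b^2 - a* D = a^2* z" and o: "sg = a^2* om"
  shows "u^4 - (b^2 - a* D)* u^2 - a^2* sg/4 = a^4 * (vv^2 - z * vv - om/4)" unfolding u2 u4 z o
    by (simp add: algebra_simps power2_eq_square power4_eq_xxxx)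
lemma l4: fixes vv z om w :: real assumes veq: "vv^2 - z * vv - om/4 = 0" and vpos: "vv > 0" and om: "om > 0"
  and wd: "w = (z + sqrt (z^2 + om))/2"
  shows "vv = w"
proof -
  have "(2 * vv - z)^2 = z^2 + om" using veq by (simp add: power2_eq_square algebra_simps)
  then have abs: "\<bar>2 * vv - z\<bar> = sqrt (z^2 + om)" using real_sqrt_abs[of "2 * vv - z"] by simp
  have "2 * vv - z \<ge> 0"
  proof (rule ccontr)
    assume "\<not> 2 * vv - z \<ge> 0"
    have "vv * (vv - z) = om/4" using veq by (simp add: algebra_simps power2_eq_square)
    moreover have "vv - z < 0" using \<open>\<not> 2 * vv - z \<ge> 0\<close> vpos by simp
    ultimately show False using mult_pos_neg[of vv "vv - z"] vpos om by linarith
  qed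
  with abs show "vv = w" unfolding wd by simp
qed
lemma alg_unique:
  fixes a b D sg z om w u :: real
  assumes a: "a \<noteq> 0" and s: "sg > 0" and upos: "u > 0"
  and zd: "z = (b^2 - a* D)/a^2" and od: "om = sg/a^2"
  and wd: "w = (z + sqrt (z^2 + om))/2"
  and q: "u^4 - (b^2 - a* D)* u^2 - a^2* sg/4 = 0"
  shows "u = \<bar>a\<bar> * sqrt w"
proof -
  have om: "om > 0" using a s od by simp
  define vv where "vv = u^2 / a^2"
  have vpos: "vv > 0" and u2: "u^2 = a^2 * vv" using l1[OF a upos vv_def] by auto
  have u4: "u^4 = a^4 * vv^2" by (rule l2[OF u2])
  have z: "b^2 - a* D = a^2* z" using a zd by simp
  have o: "sg = a^2* om" using a od by simp
  have "a^4 * (vv^2 - z * vv - om/4) = 0" using l3[OF u2 u4 z o] q by linarith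
  then have veq: "vv^2 - z * vv - om/4 = 0" using a by simp
  have "vv = w" by (rule l4[OF veq vpos om wd])
  then have "u^2 = (\<bar>a\<bar> * sqrt w)^2" using u2 vpos by (simp add: power_mult_distrib)
  moreover have "\<bar>a\<bar> * sqrt w \<ge> 0" using \<open>vv = w\<close> vpos by simp
  ultimately show ?thesis using upos power2_eq_imp_eq by (metis less_imp_le)
qed
lemma key_id:
  fixes a b D sg u m1 m2 :: real
  assumes u: "u > 0" and h1: "a* m1 = b - u" and h2: "m2 = m1^2 + sg/(4* u^2)"
  shows "a*(D - a* m2 - 2* u* m1) * u^2 = u^4 - (b^2 - a* D)* u^2 - a^2* sg/4"
proof -
  have "a*(D - a* m2 - 2* u* m1) * u^2 = (a* D - (a* m1)^2 - 2* u*(a* m1)) * u^2 - a^2* sg/4"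
    unfolding h2 using u by (simp add: field_simps power2_eq_square)
  also have "\<dots> = (a* D - (b-u)^2 - 2* u*(b-u)) * u^2 - a^2* sg/4" unfolding h1 ..
  also have "\<dots> = u^4 - (b^2 - a* D)* u^2 - a^2* sg/4"
    by (simp add: power2_eq_square power4_eq_xxxx algebra_simps)
  finally show ?thesis .
qed
lemma support_full:
  assumes P: "prob_space F" and S: "sets F = sets borel"
  shows "AE t in F. t \<in> measure_support F"
proof -
  interpret prob_space F by (rule P)
  define \<F> where "\<F> = {ball t e | t e. e > 0 \<and> measure F (ball t e) = 0}"
  have op: "\<And>S. S \<in> \<F> \<Longrightarrow> openin (top_of_set UNIV) S" unfolding \<F>_def by auto
  obtain \<F>' where F': "\<F>' \<subseteq> \<F>" "countable \<F>'" "\<Union>\<F>' = \<Union>\<F>"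
    using Lindelof_openin[OF op] by blast
  have sub: "UNIV - measure_support F \<subseteq> \<Union>\<F>"
  proof
    fix t assume "t \<in> UNIV - measure_support F"
    then obtain e where "e > 0" "\<not> measure F (ball t e) > 0" unfolding measure_support_def by auto
    then have "measure F (ball t e) = 0" using measure_nonneg[of F "ball t e"] by linarith
    with \<open>e > 0\<close> have "ball t e \<in> \<F>" unfolding \<F>_def by blast
    then show "t \<in> \<Union>\<F>" using \<open>e > 0\<close> by (meson UnionI centre_in_ball)
  qed
  have nul: "N \<in> null_sets F" if "N \<in> \<F>'" for N
  proof -
    from that F'(1) obtain t e where N: "N = ball t e" "measure F (ball t e) = 0" unfolding \<F>_def by blast
    have "N \<in> sets F" using S N by simp
    then show ?thesis using N emeasure_eq_measure by (simp add: null_sets_def)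
  qed
  have "(\<Union>N\<in>\<F>'. N) \<in> null_sets F" by (rule null_sets_UN'[OF F'(2) nul])
  then have "\<Union>\<F> \<in> null_sets F" using F'(3) by simp
  then show ?thesis using sub by (auto intro: AE_I' )
qed

lemma quad_form:
  fixes a b c m1 m2 \<theta> y :: real
  shows "(1/2 + c* y - b* y^2 - \<theta>* y) + ((a* y^2 - c)* m1 + (b - a* y)* m2)
     = (1/2 - c* m1 + b* m2) + (c - a* m2 - \<theta>)* y + (a* m1 - b)* y^2"
  by (simp add: algebra_simps)

theorem theorem3:
  fixes a b c \<alpha> \<beta> :: real and F :: "real measure"
  assumes "a \<noteq> 0" and "b > 0" and "c > 0"
    and "prob_space F" and "sets F = sets borel"
    and "measure_support F = {\<alpha>..\<beta>}"
    and "0 < \<alpha>" and "\<beta> < c"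
    and "(\<integral>t. t^2 \<partial>F) - (\<integral>t. t \<partial>F)^2 > 0"
  shows "\<exists>x. symmetric_BNE a b c F \<alpha> \<beta> x
           \<and> (\<forall>y. symmetric_BNE a b c F \<alpha> \<beta> y \<longrightarrow> (\<forall>\<theta>\<in>{\<alpha>..\<beta>}. y \<theta> = x \<theta>))
           \<and> (\<exists>p q. \<forall>\<theta>\<in>{\<alpha>..\<beta>}. x \<theta> = p + q * \<theta>)
           \<and> (\<forall>s t. \<alpha> \<le> s \<and> s < t \<and> t \<le> \<beta> \<longrightarrow> x t < x s)
           \<and> (let M1 = (\<integral>t. t \<partial>F); M2 = (\<integral>t. t^2 \<partial>F);
                  \<Delta> = c - M1; \<sigma>2 = M2 - M1^2;
                  \<kappa> = b / a; \<omega> = \<sigma>2 / a^2; \<zeta> = (b^2 - a * \<Delta>) / a^2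
              in (\<integral>t. x t \<partial>F) = \<kappa> - sgn a / sqrt 2 * sqrt (\<zeta> + sqrt (\<zeta>^2 + \<omega>)))"
proof -
  note a = assms(1)
  interpret prob_space F by (rule assms(4))
  define M1 where "M1 = (\<integral>t. t \<partial>F)"
  define M2 where "M2 = (\<integral>t. t^2 \<partial>F)"
  define \<sigma>2 where "\<sigma>2 = M2 - M1^2"
  define \<Delta> where "\<Delta> = c - M1"
  define \<zeta> where "\<zeta> = (b^2 - a * \<Delta>) / a^2"
  define \<omega> where "\<omega> = \<sigma>2 / a^2"
  define w where "w = (\<zeta> + sqrt (\<zeta>^2 + \<omega>))/2"
  define u where "u = \<bar>a\<bar> * sqrt w"
  have spos: "\<sigma>2 > 0" using assms(9) unfolding \<sigma>2_def M1_def M2_def by simp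
  have AEs: "AE t in F. \<alpha> \<le> t \<and> t \<le> \<beta>"
    using support_full[OF assms(4) assms(5)] unfolding assms(6) by simp
  have mb: "f \<in> borel_measurable F" if "f \<in> borel_measurable borel" for f :: "real \<Rightarrow> real"
    using that measurable_cong_sets[OF assms(5), of "borel::real measure" "borel::real measure"] by simp
  have I1: "integrable F (\<lambda>t. t)"
  proof (rule integrable_const_bound[where B=\<beta>])
    show "AE x in F. norm x \<le> \<beta>" using AEs by eventually_elim (use assms(7) in auto)
    show "(\<lambda>t. t) \<in> borel_measurable F" by (rule mb) simp
  qed
  have I2: "integrable F (\<lambda>t. t^2)"
  proof (rule integrable_const_bound[where B="\<beta>^2"])
    show "AE x in F. norm (x^2) \<le> \<beta>^2" using AEs
      by eventually_elim (use assms(7) in \<open>auto intro: power_mono\<close>)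
    show "(\<lambda>t. t^2) \<in> borel_measurable F" by (rule mb) simp
  qed
  have ab: "\<alpha> < \<beta>"
  proof (rule ccontr)
    assume "\<not> \<alpha> < \<beta>"
    have AEa: "AE t in F. t = \<alpha>" using AEs by eventually_elim (use \<open>\<not> \<alpha> < \<beta>\<close> in auto)
    have "M1 = (\<integral>t. \<alpha> \<partial>F)" unfolding M1_def
      by (rule integral_cong_AE[OF _ _ AEa]) (rule mb, simp)+
    then have m1: "M1 = \<alpha>" by (simp add: prob_space)
    have AEa2: "AE t in F. t^2 = \<alpha>^2" using AEa by eventually_elim simp
    have "M2 = (\<integral>t. \<alpha>^2 \<partial>F)" unfolding M2_def
      by (rule integral_cong_AE[OF _ _ AEa2]) (rule mb, simp)+
    then have m2: "M2 = \<alpha>^2" by (simp add: prob_space)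
    show False using spos m1 m2 unfolding \<sigma>2_def by simp
  qed
  have wpos: "w > 0" and quart: "u^4 - (b^2 - a*\<Delta>)* u^2 - a^2*\<sigma>2/4 = 0"
    using alg_exist[OF a spos \<zeta>_def \<omega>_def w_def] unfolding u_def by auto
  have upos: "u > 0" using a wpos unfolding u_def by simp
  define m1 where "m1 = (b - u)/a"
  define m2 where "m2 = m1^2 + \<sigma>2/(4* u^2)"
  define p where "p = (c - a* m2)/(2* u)"
  define q where "q = -1/(2* u)"
  define x where "x = (\<lambda>\<theta>::real. p + q*\<theta>)"
  have h1: "a* m1 = b - u" using a unfolding m1_def by simp
  have "a*(\<Delta> - a* m2 - 2* u* m1) * u^2 = 0" using key_id[OF upos h1 m2_def] quart by simp
  then have h2: "\<Delta> - a* m2 - 2* u* m1 = 0" using a upos by simp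
  note mom = affine_moments[OF assms(4) I1 I2, folded M1_def M2_def]
  have Ex: "(\<integral>t. x t \<partial>F) = m1"
  proof -
    have "(\<integral>t. x t \<partial>F) = p + q* M1" unfolding x_def by (rule mom(3))
    also have "\<dots> = (\<Delta> - a* m2)/(2* u)" unfolding p_def q_def \<Delta>_def using upos
      by (simp add: field_simps)
    also have "\<dots> = m1" using h2 upos by (simp add: field_simps)
    finally show ?thesis .
  qed
  have Ex2: "(\<integral>t. (x t)^2 \<partial>F) = m2"
  proof -
    have "(\<integral>t. (x t)^2 \<partial>F) = p^2 + 2* p* q* M1 + q^2* M2" unfolding x_def by (rule mom(4))
    also have "\<dots> = (p + q* M1)^2 + q^2*\<sigma>2" unfolding \<sigma>2_def by (simp add: algebra_simps power2_eq_square)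
    also have "p + q* M1 = m1" using Ex mom(3) unfolding x_def by simp
    also have "q^2*\<sigma>2 = \<sigma>2/(4* u^2)" unfolding q_def using upos by (simp add: power2_eq_square)
    finally show ?thesis unfolding m2_def .
  qed
  have xI1: "integrable F x" unfolding x_def by (rule mom(1))
  have xI2: "integrable F (\<lambda>t. (x t)^2)" unfolding x_def by (rule mom(2))
  have BNE: "symmetric_BNE a b c F \<alpha> \<beta> x"
    unfolding symmetric_BNE_def
  proof (intro conjI xI1 xI2 ballI allI)
    fix \<theta> xt :: real
    have hX: "c - a* m2 - \<theta> = 2* u*(x \<theta>)" unfolding x_def p_def q_def using upos
      by (simp add: field_simps)
    have U: "interim_utility a b c F x \<theta> z = (1/2 - c* m1 + b* m2) + 2* u*(x \<theta>)* z - u* z^2" for z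
      unfolding interim_formula[OF assms(4) xI1 xI2] Ex Ex2 quad_form hX h1 by simp
    have "u * (xt - x \<theta>)^2 \<ge> 0" using upos by simp
    then show "interim_utility a b c F x \<theta> xt \<le> interim_utility a b c F x \<theta> (x \<theta>)"
      unfolding U by (simp add: power2_eq_square algebra_simps)
  qed
  have uniq: "\<forall>\<theta>\<in>{\<alpha>..\<beta>}. y \<theta> = x \<theta>" if yB: "symmetric_BNE a b c F \<alpha> \<beta> y" for y
  proof -
    have yI1: "integrable F y" and yI2: "integrable F (\<lambda>t. (y t)^2)"
      and yopt: "\<And>\<theta> xt. \<theta> \<in> {\<alpha>..\<beta>} \<Longrightarrow> interim_utility a b c F y \<theta> xt \<le> interim_utility a b c F y \<theta> (y \<theta>)"
      using yB unfolding symmetric_BNE_def by auto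
    define n1 where "n1 = (\<integral>t. y t \<partial>F)"
    define n2 where "n2 = (\<integral>t. (y t)^2 \<partial>F)"
    define A where "A = a* n1 - b"
    have U: "interim_utility a b c F y \<theta> z = (1/2 - c* n1 + b* n2) + (c - a* n2 - \<theta>)* z + A* z^2" for \<theta> z
      unfolding interim_formula[OF assms(4) yI1 yI2] quad_form A_def n1_def n2_def by simp
    have foc: "A \<le> 0 \<and> 2* A*(y \<theta>) + (c - a* n2 - \<theta>) = 0" if th: "\<theta> \<in> {\<alpha>..\<beta>}" for \<theta>
    proof (rule quad_max)
      fix t :: real
      have "interim_utility a b c F y \<theta> (y \<theta> + t) - interim_utility a b c F y \<theta> (y \<theta>)
         = t * (A* t + (2* A*(y \<theta>) + (c - a* n2 - \<theta>)))"
        unfolding U by (simp add: algebra_simps power2_eq_square)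
      then show "t * (A* t + (2* A*(y \<theta>) + (c - a* n2 - \<theta>))) \<le> 0" using yopt[OF th, of "y \<theta> + t"] by simp
    qed
    have "A \<noteq> 0"
    proof
      assume "A = 0"
      then have "c - a* n2 - \<alpha> = 0" "c - a* n2 - \<beta> = 0" using foc[of \<alpha>] foc[of \<beta>] ab by auto
      then show False using ab by simp
    qed
    with foc[of \<alpha>] ab have Aneg: "A < 0" by auto
    define u' where "u' = -A"
    have u'pos: "u' > 0" using Aneg unfolding u'_def by simp
    define p' where "p' = (c - a* n2)/(2* u')"
    define q' where "q' = -1/(2* u')"
    have yform: "y \<theta> = p' + q'*\<theta>" if "\<theta> \<in> {\<alpha>..\<beta>}" for \<theta>
    proof -
      have "2* A*(y \<theta>) + (c - a* n2 - \<theta>) = 0" using foc[OF that] by simp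
      then have "2* u'*(y \<theta>) = c - a* n2 - \<theta>" unfolding u'_def by simp
      then have "y \<theta> = (c - a* n2 - \<theta>)/(2* u')" using u'pos by (simp add: eq_divide_eq mult.commute)
      then show ?thesis unfolding p'_def q'_def by (simp add: diff_divide_distrib)
    qed
    have AEy: "AE t in F. y t = p' + q'* t" using AEs by eventually_elim (simp add: yform)
    have ymeas: "y \<in> borel_measurable F" using yI1 by auto
    have "n1 = (\<integral>t. p' + q'* t \<partial>F)" unfolding n1_def
      by (rule integral_cong_AE[OF ymeas _ AEy]) (rule mb, simp)
    then have n1e: "n1 = p' + q'* M1" using mom(3) by simp
    have AEy2: "AE t in F. (y t)^2 = (p' + q'* t)^2" using AEy by eventually_elim simp
    have ymeas2: "(\<lambda>t. (y t)^2) \<in> borel_measurable F" using yI2 by auto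
    have "n2 = (\<integral>t. (p' + q'* t)^2 \<partial>F)" unfolding n2_def
      by (rule integral_cong_AE[OF ymeas2 _ AEy2]) (rule mb, simp)
    then have n2e: "n2 = p'^2 + 2* p'* q'* M1 + q'^2* M2" using mom(4) by simp
    have g1: "a* n1 = b - u'" unfolding u'_def A_def by simp
    have g2: "n2 = n1^2 + \<sigma>2/(4* u'^2)"
    proof -
      have "n2 = (p' + q'* M1)^2 + q'^2*\<sigma>2" unfolding n2e \<sigma>2_def by (simp add: algebra_simps power2_eq_square)
      also have "q'^2*\<sigma>2 = \<sigma>2/(4* u'^2)" unfolding q'_def using u'pos by (simp add: power2_eq_square)
      finally show ?thesis unfolding n1e .
    qed
    have g3: "\<Delta> - a* n2 - 2* u'* n1 = 0" unfolding n1e p'_def q'_def \<Delta>_def using u'pos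
      by (simp add: field_simps)
    have "u'^4 - (b^2 - a*\<Delta>)* u'^2 - a^2*\<sigma>2/4 = 0" using key_id[OF u'pos g1 g2, of \<Delta>] g3 by simp
    then have "u' = \<bar>a\<bar> * sqrt w" by (rule alg_unique[OF a spos u'pos \<zeta>_def \<omega>_def w_def])
    then have uu: "u' = u" unfolding u_def .
    have "n1 = m1" using g1 a unfolding uu m1_def by (simp add: field_simps)
    then have "n2 = m2" using g2 unfolding uu m2_def by simp
    then have "p' = p" "q' = q" unfolding p'_def p_def q'_def q_def uu by simp_all
    then show ?thesis using yform unfolding x_def by simp
  qed
  have dec: "\<forall>s t. \<alpha> \<le> s \<and> s < t \<and> t \<le> \<beta> \<longrightarrow> x t < x s"
  proof (intro allI impI)
    fix s t :: real assume "\<alpha> \<le> s \<and> s < t \<and> t \<le> \<beta>"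
    then have "s < t" by simp
    moreover have "q < 0" unfolding q_def using upos by simp
    ultimately show "x t < x s" unfolding x_def by (simp add: mult_less_cancel_left_neg)
  qed
  have sgnu: "u / a = sgn a * sqrt w" unfolding u_def using a
    by (cases "a > 0") (auto simp: sgn_if)
  have sw: "sqrt w = sqrt (\<zeta> + sqrt (\<zeta>^2 + \<omega>)) / sqrt 2" unfolding w_def by (simp add: real_sqrt_divide)
  have fin: "(\<integral>t. x t \<partial>F) = b / a - sgn a / sqrt 2 * sqrt (\<zeta> + sqrt (\<zeta>^2 + \<omega>))"
  proof -
    have "(\<integral>t. x t \<partial>F) = b/a - u/a" unfolding Ex m1_def by (simp add: diff_divide_distrib)
    also have "\<dots> = b / a - sgn a / sqrt 2 * sqrt (\<zeta> + sqrt (\<zeta>^2 + \<omega>))" unfolding sgnu sw by simp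
    finally show ?thesis .
  qed
  show ?thesis
  proof (intro exI[of _ x] conjI)
    show "symmetric_BNE a b c F \<alpha> \<beta> x" by (rule BNE)
    show "\<forall>y. symmetric_BNE a b c F \<alpha> \<beta> y \<longrightarrow> (\<forall>\<theta>\<in>{\<alpha>..\<beta>}. y \<theta> = x \<theta>)" using uniq by blast
    show "\<exists>p q. \<forall>\<theta>\<in>{\<alpha>..\<beta>}. x \<theta> = p + q * \<theta>" unfolding x_def by blast
    show "\<forall>s t. \<alpha> \<le> s \<and> s < t \<and> t \<le> \<beta> \<longrightarrow> x t < x s" by (rule dec)
    show "let M1 = (\<integral>t. t \<partial>F); M2 = (\<integral>t. t^2 \<partial>F);
                  \<Delta> = c - M1; \<sigma>2 = M2 - M1^2;
                  \<kappa> = b / a; \<omega> = \<sigma>2 / a^2; \<zeta> = (b^2 - a * \<Delta>) / a^2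
              in (\<integral>t. x t \<partial>F) = \<kappa> - sgn a / sqrt 2 * sqrt (\<zeta> + sqrt (\<zeta>^2 + \<omega>))"
      unfolding Let_def using fin unfolding \<zeta>_def \<omega>_def \<Delta>_def \<sigma>2_def M1_def M2_def .
  qed
qed

end
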